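(* Let $\mathcal{X}\subseteq\mathbb{R}^n$, let $\mathcal{W}=[0,L_0]\times\cdots\times[0,L_{v-1}]\subset\mathbb{R}^v$ with $L_i>0$, let $g:\mathcal{X}\to\mathcal{W}$ be a fixed (Borel measurable) map, and let $\mu$ be a Borel probability measure on $\mathcal{W}$. Then the spectral ergodic cost function $\mathcal{E}_\mu$ (defined below) is a $\mu$-ergodic cost function; that is, for every continuous trajectory $x:\mathbb{R}^+\to\mathcal{X}$, if $\mathcal{E}_\mu(x|_{[0,T]})\to 0$ as $T\to\infty$, then the time-averaged measures $\mathcal{Q}_T$ of $x$ converge weakly to $\mu$ as $T\to\infty$, i.e. $\lim_{T\to\infty}\int_{\mathcal{W}}\phi\,d\mathcal{Q}_T=\int_{\mathcal{W}}\phi\,d\mu$ for every continuous $\phi:\mathcal{W}\to\mathbb{R}$.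
   Context: For a continuous trajectory $x:[0,T]\to\mathcal{X}$ (or the restriction $x|_{[0,T]}$ of $x:\mathbb{R}^+\to\mathcal{X}$), the time-averaged trajectory statistics measure is the probability measure on $\mathcal{W}$ given by $\mathcal{Q}_T(A)=\frac{1}{T}\,m\big((g\circ x)^{-1}(A)\cap[0,T]\big)$ for Borel $A\subset\mathcal{W}$, where $m$ is Lebesgue measure on $\mathbb{R}^+$; equivalently $\int_{\mathcal{W}}\phi\,d\mathcal{Q}_T=\frac1T\int_0^T\phi(g(x(t)))\,dt$. Let $\mathcal{K}^v=\mathbb{N}^v$ be the set of all integer frequency multi-indices $k=(k_0,\dots,k_{v-1})$, and for each $k$ let $F_k(w)=\frac{1}{h_k}\prod_{i=0}^{v-1}\cos\!\left(\frac{w_i k_i\pi}{L_i}\right)$, where $h_k>0$ is a normalizing constant. Let $\Lambda_k=(1+\|k\|_2)^{-\frac{v+1}{2}}$. The spectral ergodic cost of $x:[0,T]\to\mathcal{X}$ is $\mathcal{E}_\mu(x)=\sum_{k\in\mathcal{K}^v}\Lambda_k\left(\frac1T\int_0^T F_k(g(x(t)))\,dt-\int_{\mathcal{W}}F_k(w)\,d\mu(w)\right)^2.$ A $\mu$-ergodic cost function is a function $\mathcal{E}$ on finite-time trajectories such that for every trajectory $x:\mathbb{R}^+\to\mathcal{X}$, $\mathcal{E}(x|_{[0,T]})\to0$ as $T\to\infty$ implies $x$ is ergodic with respect to $\mu$, meaning $\mathcal{Q}_T$ converges weakly to $\mu$. *)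

theory Defs
  imports "HOL-Probability.Probability"
begin

definition workspace :: "real^'v \<Rightarrow> (real^'v) set" where
  "workspace L = {w. \<forall>i. 0 \<le> w$i \<and> w$i \<le> L$i}"

definition fourier_basis :: "(('v::finite \<Rightarrow> nat) \<Rightarrow> real) \<Rightarrow> real^'v \<Rightarrow> ('v \<Rightarrow> nat) \<Rightarrow> real^'v \<Rightarrow> real" where
  "fourier_basis h L k w = (1 / h k) * (\<Prod>i\<in>UNIV. cos (w$i * real (k i) * pi / L$i))"

definition spectral_weight :: "('v::finite \<Rightarrow> nat) \<Rightarrow> real" where
  "spectral_weight k = (1 + sqrt (\<Sum>i\<in>UNIV. (real (k i))\<^sup>2)) powr (- (real CARD('v) + 1) / 2)"

text \<open>Time average (1/T) int_0^T phi(g(x t)) dt, i.e. the integral of phi against Q_T.\<close>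
definition time_average :: "('x \<Rightarrow> 'w) \<Rightarrow> (real \<Rightarrow> 'x) \<Rightarrow> real \<Rightarrow> ('w \<Rightarrow> real) \<Rightarrow> real" where
  "time_average g x T \<phi> = (1 / T) * (LINT t:{0..T}|lborel. \<phi> (g (x t)))"

text \<open>Spectral ergodic cost of x restricted to [0,T]; valued in ennreal so that a divergent
  series counts as +infinity.\<close>
definition spectral_ergodic_cost ::
  "(('v::finite \<Rightarrow> nat) \<Rightarrow> real) \<Rightarrow> real^'v \<Rightarrow> (real^'v) measure \<Rightarrow> ('x \<Rightarrow> real^'v)
     \<Rightarrow> (real \<Rightarrow> 'x) \<Rightarrow> real \<Rightarrow> ennreal" where
  "spectral_ergodic_cost h L \<mu> g x T =
     (\<Sum>\<^sub>\<infinity>k\<in>UNIV. ennreal (spectral_weight k *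
        (time_average g x T (fourier_basis h L k) - (\<integral>w. fourier_basis h L k w \<partial>\<mu>))\<^sup>2))"

definition ergodic_wrt :: "('x \<Rightarrow> 'w::topological_space) \<Rightarrow> 'w measure \<Rightarrow> (real \<Rightarrow> 'x) \<Rightarrow> bool" where
  "ergodic_wrt g \<mu> x \<longleftrightarrow>
     (\<forall>\<phi>. continuous_on (space \<mu>) \<phi> \<longrightarrow>
        ((\<lambda>T. time_average g x T \<phi>) \<longlongrightarrow> (\<integral>w. \<phi> w \<partial>\<mu>)) at_top)"

definition ergodic_cost_function ::
  "('x::topological_space) set \<Rightarrow> ('x \<Rightarrow> 'w::topological_space) \<Rightarrow> 'w measure
     \<Rightarrow> ((real \<Rightarrow> 'x) \<Rightarrow> real \<Rightarrow> ennreal) \<Rightarrow> bool" where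
  "ergodic_cost_function X g \<mu> E \<longleftrightarrow>
     (\<forall>x. continuous_on {0..} x \<longrightarrow> x ` {0..} \<subseteq> X \<longrightarrow>
        ((\<lambda>T. E x T) \<longlongrightarrow> 0) at_top \<longrightarrow> ergodic_wrt g \<mu> x)"

end

theory Submission imports Defs begin

lemma meas_comp:
  fixes x :: "real \<Rightarrow> real^'n" and g :: "real^'n \<Rightarrow> real^'v" and \<phi> :: "real^'v \<Rightarrow> real"
  assumes xc: "continuous_on {0..} x" and xX: "x ` {0..} \<subseteq> X"
    and g_maps: "g ` X \<subseteq> W"
    and g_meas: "g \<in> borel_measurable (restrict_space borel X)"
    and phic: "continuous_on W \<phi>"
    and T: "0 \<le> T"
  shows "(\<lambda>t. \<phi> (g (x t))) \<in> borel_measurable (restrict_space lborel {0..T})"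
proof -
  have "continuous_on {0..T} x" using xc by (rule continuous_on_subset) auto
  then have "x \<in> borel_measurable (restrict_space borel {0..T})"
    by (rule borel_measurable_continuous_on_restrict)
  then have x1: "x \<in> measurable (restrict_space lborel {0..T}) borel"
    by (simp add: measurable_def space_restrict_space sets_restrict_space)
  have x2: "x \<in> measurable (restrict_space lborel {0..T}) (restrict_space borel X)"
    apply (rule measurable_restrict_space2[OF _ x1])
    using xX T by (auto simp: space_restrict_space)
  have g2: "g \<in> measurable (restrict_space borel X) (restrict_space borel W)"
    apply (rule measurable_restrict_space2[OF _ g_meas])
    using g_maps by (auto simp: space_restrict_space)
  have p: "\<phi> \<in> borel_measurable (restrict_space borel W)"
    using phic by (rule borel_measurable_continuous_on_restrict)
  show ?thesis
    using measurable_comp[OF measurable_comp[OF x2 g2] p] by (simp add: comp_def)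
qed

lemma int_comp:
  fixes x :: "real \<Rightarrow> real^'n" and g :: "real^'n \<Rightarrow> real^'v" and \<phi> :: "real^'v \<Rightarrow> real"
  assumes xc: "continuous_on {0..} x" and xX: "x ` {0..} \<subseteq> X"
    and g_maps: "g ` X \<subseteq> W"
    and g_meas: "g \<in> borel_measurable (restrict_space borel X)"
    and phic: "continuous_on W \<phi>" and Wc: "compact W"
    and T: "0 \<le> T"
  shows "set_integrable lborel {0..T} (\<lambda>t. \<phi> (g (x t)))"
proof -
  obtain B where B: "\<And>w. w \<in> W \<Longrightarrow> norm (\<phi> w) \<le> B"
    using compact_imp_bounded[OF compact_continuous_image[OF phic Wc]]
    by (auto simp: bounded_iff)
  interpret F: finite_measure "restrict_space lborel {0..T}"
    using T by (intro finite_measureI) (simp add: emeasure_restrict_space space_restrict_space)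
  have "integrable (restrict_space lborel {0..T}) (\<lambda>t. \<phi> (g (x t)))"
  proof (rule F.integrable_const_bound[where B=B])
    show "AE t in restrict_space lborel {0..T}. norm (\<phi> (g (x t))) \<le> B"
      using xX g_maps B by (intro AE_I2) (auto simp: space_restrict_space)
    show "(\<lambda>t. \<phi> (g (x t))) \<in> borel_measurable (restrict_space lborel {0..T})"
      by (rule meas_comp[OF xc xX g_maps g_meas phic T])
  qed
  then show ?thesis by (subst set_integrable_eq) auto
qed

lemma int_mu:
  assumes mu_prob: "prob_space \<mu>"
    and mu_sets: "sets \<mu> = sets (restrict_space borel W)"
    and phic: "continuous_on W \<phi>" and Wc: "compact W"
  shows "integrable \<mu> (\<phi>::_\<Rightarrow>real)"
proof -
  interpret prob_space \<mu> by fact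
  have sp: "space \<mu> = W" using sets_eq_imp_space_eq[OF mu_sets] by (simp add: space_restrict_space)
  obtain B where B: "\<And>w. w \<in> W \<Longrightarrow> norm (\<phi> w) \<le> B"
    using compact_imp_bounded[OF compact_continuous_image[OF phic Wc]]
    by (auto simp: bounded_iff)
  show ?thesis
  proof (rule integrable_const_bound[where B=B])
    show "AE t in \<mu>. norm (\<phi> t) \<le> B" using B sp by (intro AE_I2) auto
    have "\<phi> \<in> borel_measurable (restrict_space borel W)"
      using phic by (rule borel_measurable_continuous_on_restrict)
    then show "\<phi> \<in> borel_measurable \<mu>"
      using measurable_cong_sets[OF mu_sets refl] by blast
  qed
qed

definition cb :: "real^'v \<Rightarrow> ('v::finite \<Rightarrow> nat) \<Rightarrow> real^'v \<Rightarrow> real" where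
  "cb L k w = (\<Prod>i\<in>UNIV. cos (w$i * real (k i) * pi / L$i))"

inductive_set calg :: "real^'v \<Rightarrow> (real^'v \<Rightarrow> real) set" for L :: "real^'v::finite" where
  basic: "cb L k \<in> calg L"
| add: "f \<in> calg L \<Longrightarrow> g \<in> calg L \<Longrightarrow> (\<lambda>w. f w + g w) \<in> calg L"
| smul: "f \<in> calg L \<Longrightarrow> (\<lambda>w. c * f w) \<in> calg L"

lemma calg_const: "(\<lambda>_. c) \<in> calg L"
proof -
  have "cb L (\<lambda>_. 0) = (\<lambda>_. 1)" by (simp add: cb_def fun_eq_iff)
  then show ?thesis using calg.smul[OF calg.basic[of L "\<lambda>_. 0"], of c] by simp
qed

lemma calg_sum: "finite K \<Longrightarrow> (\<And>k. k \<in> K \<Longrightarrow> f k \<in> calg L) \<Longrightarrow> (\<lambda>w. \<Sum>k\<in>K. f k w) \<in> calg L"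
proof (induction K rule: finite_induct)
  case empty then show ?case using calg_const[of 0 L] by simp
next
  case (insert a F) then show ?case by (simp add: calg.add)
qed

definition kk :: "('v \<Rightarrow> nat) \<Rightarrow> ('v \<Rightarrow> nat) \<Rightarrow> 'v set \<Rightarrow> 'v \<Rightarrow> nat" where
  "kk a b J i = (if i \<in> J then a i + b i else (if b i \<le> a i then a i - b i else b i - a i))"

lemma cb_mult:
  fixes L :: "real^'v::finite" and a b :: "'v \<Rightarrow> nat"
  shows "cb L a w * cb L b w = (1/2)^CARD('v::finite) * (\<Sum>J\<in>Pow UNIV. cb L (kk a b J) w)"
proof -
  define A where "A i = w$i * real (a i) * pi / L$i" for i
  define B where "B i = w$i * real (b i) * pi / L$i" for i
  have "cb L a w * cb L b w = (\<Prod>i\<in>UNIV. cos (A i) * cos (B i))"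
    by (simp add: cb_def A_def B_def prod.distrib)
  also have "\<dots> = (\<Prod>i\<in>(UNIV::'v set). (1/2) * (cos (A i + B i) + cos (A i - B i)))"
    by (intro prod.cong refl) (simp add: cos_times_cos)
  also have "\<dots> = (1/2)^CARD('v) * (\<Prod>i\<in>(UNIV::'v set). cos (A i + B i) + cos (A i - B i))"
    by (subst prod.distrib) simp
  also have "(\<Prod>i\<in>(UNIV::'v set). cos (A i + B i) + cos (A i - B i)) =
     (\<Sum>J\<in>Pow UNIV. (\<Prod>i\<in>J. cos (A i + B i)) * (\<Prod>i\<in>UNIV-J. cos (A i - B i)))"
    by (rule prod_add) simp
  also have "\<dots> = (\<Sum>J\<in>Pow UNIV. cb L (kk a b J) w)"
  proof (intro sum.cong refl)
    fix J :: "'v set"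
    have 1: "(\<Prod>i\<in>J. cos (A i + B i)) = (\<Prod>i\<in>J. cos (w$i * real (kk a b J i) * pi / L$i))"
      by (intro prod.cong refl) (simp add: kk_def A_def B_def add_divide_distrib algebra_simps)
    have 2: "(\<Prod>i\<in>UNIV-J. cos (A i - B i)) = (\<Prod>i\<in>UNIV-J. cos (w$i * real (kk a b J i) * pi / L$i))"
    proof (intro prod.cong refl)
      fix i assume "i \<in> UNIV - J"
      then have "cos (A i - B i) = cos (w$i * (real (a i) - real (b i)) * pi / L$i)"
        by (simp add: A_def B_def diff_divide_distrib algebra_simps)
      also have "\<dots> = cos (w$i * real (kk a b J i) * pi / L$i)"
      proof (cases "b i \<le> a i")
        case True then show ?thesis using \<open>i \<in> UNIV - J\<close> by (simp add: kk_def of_nat_diff)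
      next
        case False
        then have "w$i * (real (a i) - real (b i)) * pi / L$i = - (w$i * real (kk a b J i) * pi / L$i)"
          using \<open>i \<in> UNIV - J\<close> by (simp add: kk_def of_nat_diff diff_divide_distrib algebra_simps)
        then show ?thesis by simp
      qed
      finally show "cos (A i - B i) = cos (w$i * real (kk a b J i) * pi / L$i)" .
    qed
    have 3: "cb L (kk a b J) w = (\<Prod>i\<in>UNIV-J. cos (w$i * real (kk a b J i) * pi / L$i)) * (\<Prod>i\<in>J. cos (w$i * real (kk a b J i) * pi / L$i))"
      unfolding cb_def by (rule prod.subset_diff) auto
    show "(\<Prod>i\<in>J. cos (A i + B i)) * (\<Prod>i\<in>UNIV-J. cos (A i - B i)) = cb L (kk a b J) w"
      unfolding 1 2 3 by (rule mult.commute)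
  qed
  finally show ?thesis .
qed

lemma calg_mult_basic: "f \<in> calg L \<Longrightarrow> (\<lambda>w. cb L a w * f w) \<in> calg L"
proof (induction f rule: calg.induct)
  case (basic k)
  have "(\<lambda>w. cb L a w * cb L k w) = (\<lambda>w. (1/2)^CARD('a) * (\<Sum>J\<in>Pow UNIV. cb L (kk a k J) w))"
    by (rule ext, rule cb_mult)
  moreover have "(\<lambda>w. (\<Sum>J\<in>Pow UNIV. cb L (kk a k J) w)) \<in> calg L"
    by (rule calg_sum) (auto intro: calg.basic)
  ultimately show ?case using calg.smul[of "\<lambda>w. (\<Sum>J\<in>Pow UNIV. cb L (kk a k J) w)" L "(1/2)^CARD('a)"] by simp
next
  case (add f g) then show ?case using calg.add[OF add.IH] by (simp add: distrib_left)
next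
  case (smul f c) then show ?case using calg.smul[OF smul.IH, of c] by (simp add: algebra_simps)
qed

lemma calg_mult: "f \<in> calg L \<Longrightarrow> g \<in> calg L \<Longrightarrow> (\<lambda>w. f w * g w) \<in> calg L"
proof (induction f rule: calg.induct)
  case (basic k) then show ?case by (rule calg_mult_basic)
next
  case (add f h) then show ?case using calg.add[OF add.IH] by (simp add: distrib_right)
next
  case (smul f c) then show ?case using calg.smul[OF smul.IH, of c] by (simp add: algebra_simps)
qed

lemma calg_cont:
  assumes L: "\<And>i. L$i \<noteq> 0" and f: "f \<in> calg L" shows "continuous_on S f"
  using f
proof (induction f rule: calg.induct)
  case (basic k) show ?case unfolding cb_def by (intro continuous_intros) (simp add: L)
qed (auto intro: continuous_intros)

lemma calg_sep:
  assumes L_pos: "\<And>i. L$i > 0" and x: "x \<in> workspace L" and y: "y \<in> workspace L" and "x \<noteq> y"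
  shows "\<exists>f\<in>calg L. f x \<noteq> f y"
proof -
  obtain i where i: "x$i \<noteq> y$i" using \<open>x \<noteq> y\<close> by (auto simp: vec_eq_iff)
  define k where "k = (\<lambda>j. if j = i then 1 else (0::nat))"
  have e: "cb L k w = cos (w$i * pi / L$i)" for w
  proof -
    have "cb L k w = (\<Prod>j\<in>UNIV. if j = i then cos (w$i * pi / L$i) else 1)"
      unfolding cb_def k_def by (intro prod.cong refl) auto
    then show ?thesis by simp
  qed
  have Li: "L$i > 0" by (rule L_pos)
  have bx: "0 \<le> x$i * pi / L$i" "x$i * pi / L$i \<le> pi"
    using x Li by (auto simp: workspace_def divide_le_eq)
  have by': "0 \<le> y$i * pi / L$i" "y$i * pi / L$i \<le> pi"
    using y Li by (auto simp: workspace_def divide_le_eq)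
  have "cos (x$i * pi / L$i) \<noteq> cos (y$i * pi / L$i)"
  proof
    assume "cos (x$i * pi / L$i) = cos (y$i * pi / L$i)"
    then have "x$i * pi / L$i = y$i * pi / L$i" using cos_inj_pi bx by' by blast
    then show False using i Li by (simp add: divide_cancel_right)
  qed
  then show ?thesis using e calg.basic[of L k] by metis
qed

lemma term_le: "(f::'a\<Rightarrow>ennreal) k \<le> infsum f UNIV"
proof -
  have s: "f summable_on A" for A by (rule nonneg_summable_on_complete) auto
  have "infsum f {k} \<le> infsum f UNIV"
    by (rule infsum_mono_neutral[OF s s]) auto
  then show ?thesis by simp
qed
lemma tri3: "\<bar>a - b\<bar> \<le> e/3 \<Longrightarrow> \<bar>b - c\<bar> < e/3 \<Longrightarrow> \<bar>d - c\<bar> \<le> e/3 \<Longrightarrow> \<bar>a - d\<bar> < (e::real)"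
  by (simp only: abs_le_iff abs_less_iff) linarith

lemma fb_eq: "fourier_basis h L k = (\<lambda>w. (1 / h k) * cb L k w)"
  by (simp add: fun_eq_iff fourier_basis_def cb_def)

theorem theorem2:
  fixes X :: "(real^'n) set"
    and L :: "real^'v"
    and g :: "real^'n \<Rightarrow> real^'v"
    and \<mu> :: "(real^'v) measure"
    and h :: "('v \<Rightarrow> nat) \<Rightarrow> real"
  assumes L_pos: "\<And>i. L$i > 0"
    and g_maps: "g ` X \<subseteq> workspace L"
    and g_meas: "g \<in> borel_measurable (restrict_space borel X)"
    and mu_prob: "prob_space \<mu>"
    and mu_sets: "sets \<mu> = sets (restrict_space borel (workspace L))"
    and h_pos: "\<And>k. h k > 0"
  shows "ergodic_cost_function X g \<mu> (spectral_ergodic_cost h L \<mu> g)"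
proof -
  let ?W = "workspace L"
  have Lnz: "\<And>i. L$i \<noteq> 0" using L_pos by (metis less_irrefl)
  have spW: "space \<mu> = ?W" using sets_eq_imp_space_eq[OF mu_sets] by (simp add: space_restrict_space)
  have Wc: "compact ?W"
  proof -
    have "?W = cbox 0 L" by (auto simp: workspace_def mem_box_cart)
    then show ?thesis by simp
  qed
  interpret P: prob_space \<mu> by (rule mu_prob)
  show ?thesis
  unfolding ergodic_cost_function_def
  proof (intro allI impI)
    fix x :: "real \<Rightarrow> real^'n"
    assume xc: "continuous_on {0..} x" and xX: "x ` {0..} \<subseteq> X"
      and lim: "((\<lambda>T. spectral_ergodic_cost h L \<mu> g x T) \<longlongrightarrow> 0) at_top"
    have intT: "set_integrable lborel {0..T} (\<lambda>t. \<phi> (g (x t)))"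
      if "continuous_on ?W \<phi>" "0 \<le> T" for \<phi> :: "real^'v \<Rightarrow> real" and T :: real
      by (rule int_comp[OF xc xX g_maps g_meas that(1) Wc that(2)])
    have intM: "integrable \<mu> \<phi>" if "continuous_on ?W \<phi>" for \<phi> :: "real^'v \<Rightarrow> real"
      by (rule int_mu[OF mu_prob mu_sets that Wc])
    have basicT: "((\<lambda>T. time_average g x T (cb L k)) \<longlongrightarrow> (\<integral>w. cb L k w \<partial>\<mu>)) at_top" for k
    proof -
      define d where "d T = time_average g x T (fourier_basis h L k) - (\<integral>w. fourier_basis h L k w \<partial>\<mu>)" for T
      have sq: "0 \<le> sqrt (\<Sum>i\<in>UNIV. (real (k i))\<^sup>2)" by (intro real_sqrt_ge_zero sum_nonneg) auto
      have wpos: "spectral_weight k > 0" unfolding spectral_weight_def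
        by (rule powr_gt_zero[THEN iffD2]) (use sq in linarith)
      have le: "ennreal (spectral_weight k * (d T)^2) \<le> spectral_ergodic_cost h L \<mu> g x T" for T
        unfolding spectral_ergodic_cost_def d_def
        by (rule term_le[of "\<lambda>k. ennreal (spectral_weight k * (time_average g x T (fourier_basis h L k) - (\<integral>w. fourier_basis h L k w \<partial>\<mu>))\<^sup>2)" k])
      have "((\<lambda>T. ennreal (spectral_weight k * (d T)^2)) \<longlongrightarrow> 0) at_top"
        by (rule tendsto_sandwich[OF _ _ tendsto_const lim]) (auto simp: le)
      then have "((\<lambda>T. ennreal (spectral_weight k * (d T)^2)) \<longlongrightarrow> ennreal 0) at_top"
        by simp
      then have "((\<lambda>T. spectral_weight k * (d T)^2) \<longlongrightarrow> 0) at_top"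
        by (rule tendsto_ennrealD) (use wpos in auto)
      then have "((\<lambda>T. (1/spectral_weight k) * (spectral_weight k * (d T)^2)) \<longlongrightarrow> 0) at_top"
        by (rule tendsto_mult_right_zero)
      then have "((\<lambda>T. (d T)^2) \<longlongrightarrow> 0) at_top" using wpos by simp
      then have "((\<lambda>T. sqrt ((d T)^2)) \<longlongrightarrow> 0) at_top" using tendsto_real_sqrt by fastforce
      then have "(d \<longlongrightarrow> 0) at_top" by (simp add: tendsto_rabs_zero_iff)
      then have "((\<lambda>T. h k * d T) \<longlongrightarrow> 0) at_top" by (rule tendsto_mult_right_zero)
      moreover have "h k * d T = time_average g x T (cb L k) - (\<integral>w. cb L k w \<partial>\<mu>)" for T
        using h_pos[of k] by (simp add: d_def time_average_def fb_eq right_diff_distrib)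
      ultimately show ?thesis by (simp add: LIM_zero_iff)
    qed
    have alg: "((\<lambda>T. time_average g x T f) \<longlongrightarrow> (\<integral>w. f w \<partial>\<mu>)) at_top" if "f \<in> calg L" for f
      using that
    proof (induction f rule: calg.induct)
      case (basic k) show ?case by (rule basicT)
    next
      case (add f1 f2)
      have c1: "continuous_on ?W f1" by (rule calg_cont[OF Lnz add.hyps(1)])
      have c2: "continuous_on ?W f2" by (rule calg_cont[OF Lnz add.hyps(2)])
      have ev: "eventually (\<lambda>T. time_average g x T f1 + time_average g x T f2 = time_average g x T (\<lambda>w. f1 w + f2 w)) at_top"
        using eventually_ge_at_top[of 0]
        by eventually_elim (simp add: time_average_def intT[OF c1] intT[OF c2] distrib_left)
      have "(\<integral>w. f1 w + f2 w \<partial>\<mu>) = (\<integral>w. f1 w \<partial>\<mu>) + (\<integral>w. f2 w \<partial>\<mu>)"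
        using intM[OF c1] intM[OF c2] by simp
      then show ?case using tendsto_add[OF add.IH] ev by (simp add: tendsto_cong)
    next
      case (smul f c)
      have "time_average g x T (\<lambda>w. c * f w) = c * time_average g x T f" for T
        by (simp add: time_average_def)
      then show ?case using tendsto_mult_left[OF smul.IH, of c] by simp
    qed
    show "ergodic_wrt g \<mu> x"
      unfolding ergodic_wrt_def spW
    proof (intro allI impI)
      fix \<phi> :: "real^'v \<Rightarrow> real" assume pc: "continuous_on ?W \<phi>"
      show "((\<lambda>T. time_average g x T \<phi>) \<longlongrightarrow> (\<integral>w. \<phi> w \<partial>\<mu>)) at_top"
      proof (rule tendstoI)
        fix e :: real assume e: "0 < e"
        have SW: "\<exists>f. f \<in> calg L \<and> (\<forall>w\<in>?W. \<bar>\<phi> w - f w\<bar> < e/3)"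
        proof (rule Stone_Weierstrass_HOL[where P="\<lambda>f. f \<in> calg L"])
          show "compact ?W" by (rule Wc)
          show "(\<lambda>x. c) \<in> calg L" for c by (rule calg_const)
          show "continuous_on ?W f" if "f \<in> calg L" for f by (rule calg_cont[OF Lnz that])
          show "(\<lambda>x. f x + f' x) \<in> calg L" if "f \<in> calg L \<and> f' \<in> calg L" for f f'
            using that by (blast intro: calg.add)
          show "(\<lambda>x. f x * f' x) \<in> calg L" if "f \<in> calg L \<and> f' \<in> calg L" for f f'
            using that by (blast intro: calg_mult)
          show "\<exists>f. f \<in> calg L \<and> f x \<noteq> f y" if "x \<in> ?W \<and> y \<in> ?W \<and> x \<noteq> y" for x y
            using calg_sep[OF L_pos, of x y] that by blast
          show "continuous_on ?W \<phi>" by (rule pc)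
          show "0 < e/3" using e by simp
        qed
        then obtain f where f: "f \<in> calg L" and fa: "\<forall>w\<in>?W. \<bar>\<phi> w - f w\<bar> < e/3"
          by blast
        have fc: "continuous_on ?W f" by (rule calg_cont[OF Lnz f])
        have ev: "eventually (\<lambda>T. dist (time_average g x T f) (\<integral>w. f w \<partial>\<mu>) < e/3) at_top"
          using tendstoD[OF alg[OF f], of "e/3"] e by simp
        have b1: "\<bar>(\<integral>w. \<phi> w \<partial>\<mu>) - (\<integral>w. f w \<partial>\<mu>)\<bar> \<le> e/3"
        proof -
          have "\<bar>(\<integral>w. \<phi> w \<partial>\<mu>) - (\<integral>w. f w \<partial>\<mu>)\<bar> = \<bar>\<integral>w. \<phi> w - f w \<partial>\<mu>\<bar>"
            using intM[OF pc] intM[OF fc] by simp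
          also have "\<dots> \<le> (\<integral>w. \<bar>\<phi> w - f w\<bar> \<partial>\<mu>)" by (rule integral_abs_bound)
          also have "\<dots> \<le> (\<integral>w. e/3 \<partial>\<mu>)"
            by (rule integral_mono) (use intM[OF pc] intM[OF fc] fa spW in \<open>auto intro!: less_imp_le\<close>)
          also have "\<dots> = e/3" by (simp add: P.prob_space)
          finally show ?thesis .
        qed
        show "eventually (\<lambda>T. dist (time_average g x T \<phi>) (\<integral>w. \<phi> w \<partial>\<mu>) < e) at_top"
          using ev eventually_gt_at_top[of 0]
        proof eventually_elim
          case (elim T)
          let ?D = "\<lambda>t. \<phi> (g (x t)) - f (g (x t))"
          have T0: "0 \<le> T" using elim by simp
          have iD: "set_integrable lborel {0..T} ?D"
            using intT[OF pc T0] intT[OF fc T0] by auto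
          have ic: "set_integrable lborel {0..T} (\<lambda>t. e/3)"
            using intT[of "\<lambda>_. e/3" T] T0 by auto
          have gW: "t \<in> {0..T} \<Longrightarrow> g (x t) \<in> ?W" for t using xX g_maps by auto
          have cI: "(LINT t:{0..T}|lborel. e/3) = T * (e/3)"
            using T0 by (simp add: set_integral_const)
          have pt: "?D t \<le> e/3 \<and> - ?D t \<le> e/3" if t: "t \<in> {0..T}" for t
          proof -
            have "\<bar>\<phi> (g (x t)) - f (g (x t))\<bar> < e/3" using fa gW[OF t] by blast
            then show ?thesis by linarith
          qed
          have u1: "(LINT t:{0..T}|lborel. ?D t) \<le> T * (e/3)"
            unfolding cI[symmetric]
            by (rule set_integral_mono[OF iD ic]) (use pt in blast)
          have u2: "(LINT t:{0..T}|lborel. - ?D t) \<le> T * (e/3)"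
            unfolding cI[symmetric]
            by (rule set_integral_mono[OF _ ic]) (use intT[OF pc T0] intT[OF fc T0] pt in auto)
          have "(LINT t:{0..T}|lborel. - ?D t) = - (LINT t:{0..T}|lborel. ?D t)"
            using set_integral_mult_right[where a="-1::real" and M=lborel and A="{0..T}" and f="?D"] by simp
          then have "\<bar>LINT t:{0..T}|lborel. ?D t\<bar> \<le> T * (e/3)" using u1 u2 by linarith
          moreover have "time_average g x T \<phi> - time_average g x T f = (1/T) * (LINT t:{0..T}|lborel. ?D t)"
            using intT[OF pc T0] intT[OF fc T0] by (simp add: time_average_def right_diff_distrib)
          ultimately have "\<bar>time_average g x T \<phi> - time_average g x T f\<bar> \<le> e/3"
            using elim by (simp add: abs_mult divide_le_eq mult.commute)
          then show ?case using tri3 elim(1) b1 unfolding dist_real_def by blast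
        qed
      qed
    qed
  qed
qed

end
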